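(* Let $D_L\in\mathbb{R}_{\ge0}^{l\times l}$ be symmetric with zero diagonal, $D_N\in\mathbb{R}_{\ge0}^{m\times l}$, $d\ge1$ an integer and $\kappa>0$. Suppose $A_L=\cosh(\sqrt{\kappa}D_L)$ has at least $d$ strictly negative eigenvalues. Then the matrices $\hat X_L,\hat X_N$ returned by L-hydra$(D_L,D_N,d,\kappa)$ satisfy: (i) $\hat X_L$ minimizes $\|A_L - X_L J X_L^\top\|_F$ over all $X_L\in\mathbb{R}^{l\times(d+1)}$; (ii) $\hat X_N$ minimizes $\|A_N - X_N J \hat X_L^\top\|_F$ over all $X_N\in\mathbb{R}^{m\times(d+1)}$; (iii) every entry of the first column of $\hat X_L$ and of the first column of $\hat X_N$ is strictly positive, i.e., all rows of $\hat X_L$ and $\hat X_N$ lie in the positive Lorentz space $\{\bm{x}\in\mathbb{R}^{d+1}: x_1>0\}$.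
   Context: $\|\cdot\|_F$ is the Frobenius norm. $J=\operatorname{diag}(1,-1,\dots,-1)\in\mathbb{R}^{(d+1)\times(d+1)}$. Algorithm L-hydra$(D_L,D_N,d,\kappa)$: input a symmetric $D_L\in\mathbb{R}_{\ge0}^{l\times l}$ with zero diagonal, $D_N\in\mathbb{R}_{\ge 0}^{m\times l}$, an integer $d\ge1$ and $\kappa>0$. Step 1: set $A_L=\cosh(\sqrt{\kappa}D_L)$, $A_N=\cosh(\sqrt{\kappa}D_N)$ (cosh applied entrywise) and take an eigendecomposition $A_L=Q\Lambda Q^\top$ with $Q$ orthogonal, columns $\bm{q}_1,\dots,\bm{q}_l$, and $\Lambda=\operatorname{diag}(\lambda_1,\dots,\lambda_l)$, $\lambda_1\ge\dots\ge\lambda_l$; the sign of $\bm{q}_1$ is chosen so that its entries are positive (Perron vector). Step 2: if $\lambda_{l-d+1},\dots,\lambda_l$ are not all strictly negative (or $l<d+1$), return Null; otherwise set $\hat X_L=\big[\sqrt{\lambda_1}\bm{q}_1,\ \sqrt{-\lambda_{l-d+1}}\bm{q}_{l-d+1},\ \dots,\ \sqrt{-\lambda_l}\bm{q}_l\big]\in\mathbb{R}^{l\times(d+1)}$. Step 3: set $\hat X_N=A_N\big[\bm{q}_1/\sqrt{\lambda_1},\ -\bm{q}_{l-d+1}/\sqrt{-\lambda_{l-d+1}},\ \dots,\ -\bm{q}_l/\sqrt{-\lambda_l}\big]\in\mathbb{R}^{m\times(d+1)}$. Return $\hat X=\begin{psmallmatrix}\hat X_L\\ \hat X_N\end{psmallmatrix}$.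 *)

theory Defs
  imports Complex_Main "Jordan_Normal_Form.Matrix"
begin

text \<open>Matrices are Jordan_Normal_Form matrices (type real mat) with explicit
dimensions; all indices are 0-based.\<close>

definition frob_norm :: "real mat \<Rightarrow> real" where
  "frob_norm A = sqrt (\<Sum>i<dim_row A. \<Sum>j<dim_col A. (A $$ (i,j))\<^sup>2)"

definition lorentz_J :: "nat \<Rightarrow> real mat" where
  "lorentz_J d = mat (d+1) (d+1) (\<lambda>(i,j). if i = j then (if i = 0 then 1 else -1) else 0)"

definition cosh_mat :: "real \<Rightarrow> real mat \<Rightarrow> real mat" where
  "cosh_mat \<kappa> D = map_mat (\<lambda>x. cosh (sqrt \<kappa> * x)) D"

definition diag_of :: "nat \<Rightarrow> (nat \<Rightarrow> real) \<Rightarrow> real mat" where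
  "diag_of l lam = mat l l (\<lambda>(i,j). if i = j then lam i else 0)"

text \<open>Step 1 of L-hydra: an admissible eigendecomposition A = Q Lambda Q^T with
Q orthogonal, eigenvalues sorted decreasingly (lam 0 \<ge> ... \<ge> lam (l-1)),
and the sign of the first column q_1 chosen so that its entries are positive.\<close>

definition lhydra_eigdecomp :: "nat \<Rightarrow> real mat \<Rightarrow> real mat \<Rightarrow> (nat \<Rightarrow> real) \<Rightarrow> bool" where
  "lhydra_eigdecomp l A Q lam \<longleftrightarrow>
     Q \<in> carrier_mat l l \<and> transpose_mat Q * Q = 1\<^sub>m l \<and>
     A = Q * diag_of l lam * transpose_mat Q \<and>
     (\<forall>i j. i \<le> j \<and> j < l \<longrightarrow> lam j \<le> lam i) \<and>
     (\<forall>i<l. Q $$ (i,0) > 0)"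

text \<open>Index (0-based) of the eigenvector used in column j (1 \<le> j \<le> d):
the eigenvalues lam (l-d), ..., lam (l-1).\<close>

definition neg_idx :: "nat \<Rightarrow> nat \<Rightarrow> nat \<Rightarrow> nat" where
  "neg_idx l d j = l - d - 1 + j"

text \<open>Steps 2 and 3 of L-hydra, given the eigendecomposition (Q, lam) chosen in
Step 1. Returns None for Null.\<close>

definition lhydra :: "real mat \<Rightarrow> real mat \<Rightarrow> nat \<Rightarrow> real \<Rightarrow> real mat \<Rightarrow> (nat \<Rightarrow> real)
    \<Rightarrow> (real mat \<times> real mat) option" where
  "lhydra DL DN d \<kappa> Q lam =
    (let l = dim_row DL; AN = cosh_mat \<kappa> DN in
     if l < d + 1 \<or> \<not> (\<forall>k. l - d \<le> k \<and> k < l \<longrightarrow> lam k < 0) then None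
     else Some
      (mat l (d+1) (\<lambda>(i,j). if j = 0 then sqrt (lam 0) * Q $$ (i,0)
                            else sqrt (- lam (neg_idx l d j)) * Q $$ (i, neg_idx l d j)),
       AN * mat l (d+1) (\<lambda>(i,j). if j = 0 then Q $$ (i,0) / sqrt (lam 0)
                            else - Q $$ (i, neg_idx l d j) / sqrt (- lam (neg_idx l d j)))))"

end

theory Submission
  imports Defs
begin



lemma exists_orth:
  fixes cs :: "(nat \<Rightarrow> real) list"
  shows "finite S \<Longrightarrow> card S > length cs \<Longrightarrow>
    \<exists>x. (\<forall>k. k \<notin> S \<longrightarrow> x k = 0) \<and> (\<exists>k\<in>S. x k \<noteq> 0) \<and>
        (\<forall>c\<in>set cs. (\<Sum>k\<in>S. c k * x k) = 0)"
proof (induction "length cs" arbitrary: cs S)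
  case 0
  then obtain s where s: "s \<in> S" by (metis card.empty ex_in_conv less_nat_zero_code)
  show ?case
    by (rule exI[of _ "\<lambda>k. if k = s then 1 else 0"]) (use s 0 in auto)
next
  case (Suc n)
  then obtain c cs0 where ccs: "cs = c # cs0" by (metis length_Suc_conv)
  have n: "n = length cs0" using Suc.hyps(2) ccs by simp
  show ?case
  proof (cases "\<forall>s\<in>S. c s = 0")
    case True
    have "card S > length cs0" using Suc.prems ccs by simp
    from Suc.hyps(1)[OF n Suc.prems(1) this] obtain x where
      x: "\<forall>k. k \<notin> S \<longrightarrow> x k = 0" "\<exists>k\<in>S. x k \<noteq> 0" "\<forall>c\<in>set cs0. (\<Sum>k\<in>S. c k * x k) = 0"
      by blast
    show ?thesis using x True ccs by (intro exI[of _ x]) auto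
  next
    case False
    then obtain s where s: "s \<in> S" "c s \<noteq> 0" by auto
    define S' where "S' = S - {s}"
    have fS': "finite S'" using Suc.prems S'_def by auto
    have cS': "card S' > length cs0" using Suc.prems s S'_def ccs by auto
    define cs' where "cs' = map (\<lambda>c'. \<lambda>k. c' k - c' s / c s * c k) cs0"
    have n': "n = length cs'" using n by (simp add: cs'_def)
    have "card S' > length cs'" using cS' by (simp add: cs'_def)
    from Suc.hyps(1)[OF n' fS' this] obtain y where
      y: "\<forall>k. k \<notin> S' \<longrightarrow> y k = 0" "\<exists>k\<in>S'. y k \<noteq> 0"
         "\<forall>c\<in>set cs'. (\<Sum>k\<in>S'. c k * y k) = 0"
      by blast
    define \<alpha> where "\<alpha> = - (\<Sum>k\<in>S'. c k * y k) / c s"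
    define x where "x = (\<lambda>k. if k = s then \<alpha> else y k)"
    have split: "(\<Sum>k\<in>S. f k * x k) = f s * \<alpha> + (\<Sum>k\<in>S'. f k * y k)" for f
    proof -
      have "S = insert s S'" "s \<notin> S'" using s S'_def by auto
      hence "(\<Sum>k\<in>S. f k * x k) = f s * x s + (\<Sum>k\<in>S'. f k * x k)"
        using fS' by simp
      also have "(\<Sum>k\<in>S'. f k * x k) = (\<Sum>k\<in>S'. f k * y k)"
        by (rule sum.cong) (auto simp: x_def S'_def)
      finally show ?thesis by (simp add: x_def)
    qed
    have h1: "(\<Sum>k\<in>S. c k * x k) = 0" using split[of c] s by (simp add: \<alpha>_def)
    have h2: "(\<Sum>k\<in>S. c' k * x k) = 0" if "c' \<in> set cs0" for c'
    proof -
      have mem: "(\<lambda>k. c' k - c' s / c s * c k) \<in> set cs'" using that by (auto simp: cs'_def)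
      have "(\<Sum>k\<in>S'. (c' k - c' s / c s * c k) * y k) = 0" using y(3)[rule_format, OF mem] by simp
      hence "(\<Sum>k\<in>S'. c' k * y k) = c' s / c s * (\<Sum>k\<in>S'. c k * y k)"
        by (simp add: algebra_simps sum_subtractf sum_distrib_left)
      thus ?thesis using split[of c'] s by (simp add: \<alpha>_def field_simps)
    qed
    show ?thesis
      using y h1 h2 s ccs by (intro exI[of _ x]) (auto simp: x_def S'_def)
  qed
qed

lemma sum_U_S:
  fixes c x :: "nat \<Rightarrow> real"
  assumes "finite U" "S \<subseteq> U" "\<forall>k. k \<notin> S \<longrightarrow> x k = 0"
  shows "(\<Sum>k\<in>U. c k * x k) = (\<Sum>k\<in>S. c k * x k)"
  by (rule sum.mono_neutral_right) (use assms in auto)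

lemma chain:
  fixes S :: "nat \<Rightarrow> nat set" and cs :: "(nat \<Rightarrow> real) list" and r :: "nat \<Rightarrow> nat"
  assumes "finite U"
  shows "finite I \<Longrightarrow> inj_on r I \<Longrightarrow> (\<forall>i\<in>I. S i \<subseteq> U \<and> card (S i) > length cs + card {j\<in>I. r j < r i}) \<Longrightarrow>
    \<exists>w. \<forall>i\<in>I. (\<forall>k. k \<notin> S i \<longrightarrow> w i k = 0) \<and> (\<Sum>k\<in>U. (w i k)\<^sup>2) = 1 \<and>
        (\<forall>c\<in>set cs. (\<Sum>k\<in>U. c k * w i k) = 0) \<and>
        (\<forall>j\<in>I. j \<noteq> i \<longrightarrow> (\<Sum>k\<in>U. w i k * w j k) = 0)"
proof (induction "card I" arbitrary: I)
  case 0
  hence "I = {}" by simp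
  thus ?case by simp
next
  case (Suc n)
  hence "I \<noteq> {}" by auto
  have fr: "finite (r ` I)" "r ` I \<noteq> {}" using Suc.prems \<open>I \<noteq> {}\<close> by auto
  obtain i0 where i0: "i0 \<in> I" "r i0 = Max (r ` I)" using Max_in[OF fr] by auto
  have i0max: "\<forall>j\<in>I. r j \<le> r i0" using i0 fr by auto
  define I' where "I' = I - {i0}"
  have cI': "n = card I'" using Suc.hyps(2) Suc.prems(1) i0 I'_def by simp
  have fI': "finite I'" "inj_on r I'" using Suc.prems I'_def by (auto intro: inj_on_subset)
  have condI': "\<forall>i\<in>I'. S i \<subseteq> U \<and> card (S i) > length cs + card {j\<in>I'. r j < r i}"
  proof
    fix i assume i: "i \<in> I'"
    have "card {j\<in>I'. r j < r i} \<le> card {j\<in>I. r j < r i}"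
      by (rule card_mono) (use Suc.prems(1) I'_def in auto)
    thus "S i \<subseteq> U \<and> card (S i) > length cs + card {j\<in>I'. r j < r i}"
      using Suc.prems(3) i I'_def by fastforce
  qed
  from Suc.hyps(1)[OF cI' fI' condI'] obtain w' where
    w': "\<forall>i\<in>I'. (\<forall>k. k \<notin> S i \<longrightarrow> w' i k = 0) \<and> (\<Sum>k\<in>U. (w' i k)\<^sup>2) = 1 \<and>
        (\<forall>c\<in>set cs. (\<Sum>k\<in>U. c k * w' i k) = 0) \<and>
        (\<forall>j\<in>I'. j \<noteq> i \<longrightarrow> (\<Sum>k\<in>U. w' i k * w' j k) = 0)" by blast
  have eqI': "{j\<in>I. r j < r i0} = I'"
  proof -
    have "j \<in> I' \<Longrightarrow> r j < r i0" for j
      using i0max Suc.prems(2) i0 I'_def by (metis DiffE inj_on_eq_iff insertI1 le_neq_implies_less)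
    thus ?thesis unfolding I'_def by auto
  qed
  define ls where "ls = cs @ map w' (sorted_list_of_set I')"
  have "length ls = length cs + card I'" using fI' by (simp add: ls_def)
  hence cardS: "card (S i0) > length ls" using Suc.prems(3) i0 eqI' by auto
  have SU: "S i0 \<subseteq> U" using Suc.prems(3) i0 by auto
  have fS: "finite (S i0)" using SU assms finite_subset by blast
  from exists_orth[OF fS cardS] obtain x where
    x: "\<forall>k. k \<notin> S i0 \<longrightarrow> x k = 0" "\<exists>k\<in>S i0. x k \<noteq> 0"
       "\<forall>c\<in>set ls. (\<Sum>k\<in>S i0. c k * x k) = 0" by blast
  have xU: "\<forall>c\<in>set ls. (\<Sum>k\<in>U. c k * x k) = 0"
    using x sum_U_S[OF assms SU x(1)] by simp
  define nn where "nn = (\<Sum>k\<in>U. (x k)\<^sup>2)"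
  have nnpos: "nn > 0"
  proof -
    obtain k where k: "k \<in> S i0" "x k \<noteq> 0" using x(2) by blast
    have "(x k)\<^sup>2 \<le> nn" unfolding nn_def
      by (rule member_le_sum) (use k SU assms in auto)
    moreover have "(x k)\<^sup>2 > 0" using k by simp
    ultimately show ?thesis by linarith
  qed
  define w0 where "w0 = (\<lambda>k. x k / sqrt nn)"
  define w where "w = w'(i0 := w0)"
  have w0n: "(\<Sum>k\<in>U. (w0 k)\<^sup>2) = 1"
    using nnpos by (simp add: w0_def power_divide sum_divide_distrib[symmetric] nn_def[symmetric])
  have w0c: "(\<Sum>k\<in>U. c k * w0 k) = 0" if "c \<in> set ls" for c
  proof -
    have "(\<Sum>k\<in>U. c k * w0 k) = (\<Sum>k\<in>U. c k * x k) / sqrt nn"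
      by (simp add: w0_def sum_divide_distrib)
    thus ?thesis using xU that by simp
  qed
  have w0s: "\<forall>k. k \<notin> S i0 \<longrightarrow> w0 k = 0" using x(1) by (simp add: w0_def)
  have orth1: "(\<Sum>k\<in>U. w0 k * w' j k) = 0" if "j \<in> I'" for j
  proof -
    have "w' j \<in> set ls" using that fI' by (simp add: ls_def)
    from w0c[OF this] show ?thesis by (simp add: mult.commute)
  qed
  have orth2: "(\<Sum>k\<in>U. w' j k * w0 k) = 0" if "j \<in> I'" for j
    using orth1[OF that] by (simp add: mult.commute)
  show ?case
  proof (rule exI[of _ w], rule ballI)
    fix i assume i: "i \<in> I"
    have "\<forall>k. k \<notin> S i \<longrightarrow> w i k = 0" using w0s w' i I'_def by (auto simp: w_def)
    moreover have "(\<Sum>k\<in>U. (w i k)\<^sup>2) = 1" using w0n w' i I'_def by (auto simp: w_def)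
    moreover have "\<forall>c\<in>set cs. (\<Sum>k\<in>U. c k * w i k) = 0" using w0c w' i I'_def by (auto simp: w_def ls_def)
    moreover have "\<forall>j\<in>I. j \<noteq> i \<longrightarrow> (\<Sum>k\<in>U. w i k * w j k) = 0"
      using orth1 orth2 w' i I'_def by (auto simp: w_def)
    ultimately show "(\<forall>k. k \<notin> S i \<longrightarrow> w i k = 0) \<and> (\<Sum>k\<in>U. (w i k)\<^sup>2) = 1 \<and>
        (\<forall>c\<in>set cs. (\<Sum>k\<in>U. c k * w i k) = 0) \<and>
        (\<forall>j\<in>I. j \<noteq> i \<longrightarrow> (\<Sum>k\<in>U. w i k * w j k) = 0)" by blast
  qed
qed



lemma bessel:
  fixes C :: "nat \<Rightarrow> nat \<Rightarrow> real" and z :: "'b \<Rightarrow> nat \<Rightarrow> real"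
  assumes fA: "finite A" and fU: "finite U"
    and on: "\<forall>a\<in>A. \<forall>b\<in>A. (\<Sum>k\<in>U. z a k * z b k) = (if a = b then 1 else 0)"
  shows "(\<Sum>a\<in>A. (\<Sum>i\<in>U. \<Sum>j\<in>U. C i j * z a i * z a j)\<^sup>2) \<le> (\<Sum>i\<in>U. \<Sum>j\<in>U. (C i j)\<^sup>2)"
proof -
  define g where "g a = (\<Sum>i\<in>U. \<Sum>j\<in>U. C i j * z a i * z a j)" for a
  define P where "P i j = (\<Sum>a\<in>A. g a * (z a i * z a j))" for i j
  have mid: "(\<Sum>i\<in>U. \<Sum>j\<in>U. C i j * P i j) = (\<Sum>a\<in>A. (g a)\<^sup>2)"
  proof -
    have "(\<Sum>i\<in>U. \<Sum>j\<in>U. C i j * P i j) = (\<Sum>i\<in>U. \<Sum>j\<in>U. \<Sum>a\<in>A. g a * (C i j * z a i * z a j))"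
      unfolding P_def by (simp add: sum_distrib_left algebra_simps)
    also have "\<dots> = (\<Sum>i\<in>U. \<Sum>a\<in>A. \<Sum>j\<in>U. g a * (C i j * z a i * z a j))"
      by (rule sum.cong[OF refl], rule sum.swap)
    also have "\<dots> = (\<Sum>a\<in>A. \<Sum>i\<in>U. \<Sum>j\<in>U. g a * (C i j * z a i * z a j))"
      by (rule sum.swap)
    also have "\<dots> = (\<Sum>a\<in>A. g a * g a)"
      unfolding g_def by (simp add: sum_distrib_left)
    finally show ?thesis by (simp add: power2_eq_square)
  qed
  have last: "(\<Sum>i\<in>U. \<Sum>j\<in>U. (P i j)\<^sup>2) = (\<Sum>a\<in>A. (g a)\<^sup>2)"
  proof -
    have "(\<Sum>i\<in>U. \<Sum>j\<in>U. (P i j)\<^sup>2) =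
        (\<Sum>i\<in>U. \<Sum>j\<in>U. \<Sum>a\<in>A. \<Sum>b\<in>A. g a * g b * ((z a i * z b i) * (z a j * z b j)))"
      unfolding P_def power2_eq_square sum_product by (simp add: algebra_simps)
    also have "\<dots> = (\<Sum>i\<in>U. \<Sum>a\<in>A. \<Sum>j\<in>U. \<Sum>b\<in>A. g a * g b * ((z a i * z b i) * (z a j * z b j)))"
      by (rule sum.cong[OF refl], rule sum.swap)
    also have "\<dots> = (\<Sum>a\<in>A. \<Sum>i\<in>U. \<Sum>j\<in>U. \<Sum>b\<in>A. g a * g b * ((z a i * z b i) * (z a j * z b j)))"
      by (rule sum.swap)
    also have "\<dots> = (\<Sum>a\<in>A. \<Sum>i\<in>U. \<Sum>b\<in>A. \<Sum>j\<in>U. g a * g b * ((z a i * z b i) * (z a j * z b j)))"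
      by (rule sum.cong[OF refl], rule sum.cong[OF refl], rule sum.swap)
    also have "\<dots> = (\<Sum>a\<in>A. \<Sum>b\<in>A. \<Sum>i\<in>U. \<Sum>j\<in>U. g a * g b * ((z a i * z b i) * (z a j * z b j)))"
      by (rule sum.cong[OF refl], rule sum.swap)
    also have "\<dots> = (\<Sum>a\<in>A. \<Sum>b\<in>A. g a * g b * ((\<Sum>i\<in>U. z a i * z b i) * (\<Sum>j\<in>U. z a j * z b j)))"
      by (simp only: sum_product, simp only: sum_distrib_left)
    also have "\<dots> = (\<Sum>a\<in>A. \<Sum>b\<in>A. if a = b then g a * g a else 0)"
      by (rule sum.cong[OF refl], rule sum.cong[OF refl]) (use on in auto)
    also have "\<dots> = (\<Sum>a\<in>A. g a * g a)"
      using fA by simp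
    finally show ?thesis by (simp add: power2_eq_square)
  qed
  have "0 \<le> (\<Sum>i\<in>U. \<Sum>j\<in>U. (C i j - P i j)\<^sup>2)"
    by (intro sum_nonneg) auto
  also have "\<dots> = (\<Sum>i\<in>U. \<Sum>j\<in>U. (C i j)\<^sup>2) - 2 * (\<Sum>i\<in>U. \<Sum>j\<in>U. C i j * P i j)
      + (\<Sum>i\<in>U. \<Sum>j\<in>U. (P i j)\<^sup>2)"
    by (simp add: power2_diff sum.distrib sum_subtractf sum_distrib_left mult.assoc)
  finally show ?thesis unfolding mid last g_def by simp
qed



lemma qf:
  fixes \<alpha> :: "nat \<Rightarrow> real" and p :: "nat \<Rightarrow> nat \<Rightarrow> real" and z :: "nat \<Rightarrow> real"
  shows "(\<Sum>i\<in>U. \<Sum>j\<in>U. (\<Sum>t\<in>T. \<alpha> t * p t i * p t j) * z i * z j)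
        = (\<Sum>t\<in>T. \<alpha> t * (\<Sum>i\<in>U. p t i * z i)\<^sup>2)"
proof -
  have "(\<Sum>i\<in>U. \<Sum>j\<in>U. (\<Sum>t\<in>T. \<alpha> t * p t i * p t j) * z i * z j)
      = (\<Sum>i\<in>U. \<Sum>j\<in>U. \<Sum>t\<in>T. \<alpha> t * ((p t i * z i) * (p t j * z j)))"
    by (simp only: sum_distrib_right) (simp add: mult_ac)
  also have "\<dots> = (\<Sum>i\<in>U. \<Sum>t\<in>T. \<Sum>j\<in>U. \<alpha> t * ((p t i * z i) * (p t j * z j)))"
    by (rule sum.cong[OF refl], rule sum.swap)
  also have "\<dots> = (\<Sum>t\<in>T. \<Sum>i\<in>U. \<Sum>j\<in>U. \<alpha> t * ((p t i * z i) * (p t j * z j)))"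
    by (rule sum.swap)
  also have "\<dots> = (\<Sum>t\<in>T. \<alpha> t * (\<Sum>i\<in>U. p t i * z i)\<^sup>2)"
    by (simp only: power2_eq_square, simp only: sum_product, simp only: sum_distrib_left)
  finally show ?thesis .
qed

lemma transfer_sum:
  fixes v w :: "nat \<Rightarrow> real" and q :: "nat \<Rightarrow> nat \<Rightarrow> real"
  shows "(\<Sum>i\<in>U. v i * (\<Sum>k\<in>K. q i k * w k)) = (\<Sum>k\<in>K. w k * (\<Sum>i\<in>U. q i k * v i))"
proof -
  have "(\<Sum>i\<in>U. v i * (\<Sum>k\<in>K. q i k * w k)) = (\<Sum>i\<in>U. \<Sum>k\<in>K. w k * (q i k * v i))"
    by (simp add: sum_distrib_left algebra_simps)
  also have "\<dots> = (\<Sum>k\<in>K. \<Sum>i\<in>U. w k * (q i k * v i))" by (rule sum.swap)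
  also have "\<dots> = (\<Sum>k\<in>K. w k * (\<Sum>i\<in>U. q i k * v i))" by (simp add: sum_distrib_left)
  finally show ?thesis .
qed

lemma sq_expand:
  fixes \<mu> :: "nat \<Rightarrow> real" and q :: "nat \<Rightarrow> nat \<Rightarrow> real"
  assumes fR: "finite R"
    and on: "\<forall>k\<in>R. \<forall>k'\<in>R. (\<Sum>a\<in>U. q a k * q a k') = (if k = k' then 1 else 0)"
  shows "(\<Sum>a\<in>U. \<Sum>b\<in>U. (\<Sum>k\<in>R. \<mu> k * q a k * q b k)\<^sup>2) = (\<Sum>k\<in>R. (\<mu> k)\<^sup>2)"
proof -
  have "(\<Sum>a\<in>U. \<Sum>b\<in>U. (\<Sum>k\<in>R. \<mu> k * q a k * q b k)\<^sup>2)
      = (\<Sum>a\<in>U. \<Sum>b\<in>U. \<Sum>k\<in>R. \<Sum>k'\<in>R. \<mu> k * \<mu> k' * ((q a k * q a k') * (q b k * q b k')))"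
    unfolding power2_eq_square sum_product by (simp add: algebra_simps)
  also have "\<dots> = (\<Sum>a\<in>U. \<Sum>k\<in>R. \<Sum>b\<in>U. \<Sum>k'\<in>R. \<mu> k * \<mu> k' * ((q a k * q a k') * (q b k * q b k')))"
    by (rule sum.cong[OF refl], rule sum.swap)
  also have "\<dots> = (\<Sum>k\<in>R. \<Sum>a\<in>U. \<Sum>b\<in>U. \<Sum>k'\<in>R. \<mu> k * \<mu> k' * ((q a k * q a k') * (q b k * q b k')))"
    by (rule sum.swap)
  also have "\<dots> = (\<Sum>k\<in>R. \<Sum>a\<in>U. \<Sum>k'\<in>R. \<Sum>b\<in>U. \<mu> k * \<mu> k' * ((q a k * q a k') * (q b k * q b k')))"
    by (rule sum.cong[OF refl], rule sum.cong[OF refl], rule sum.swap)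
  also have "\<dots> = (\<Sum>k\<in>R. \<Sum>k'\<in>R. \<Sum>a\<in>U. \<Sum>b\<in>U. \<mu> k * \<mu> k' * ((q a k * q a k') * (q b k * q b k')))"
    by (rule sum.cong[OF refl], rule sum.swap)
  also have "\<dots> = (\<Sum>k\<in>R. \<Sum>k'\<in>R. \<mu> k * \<mu> k' * ((\<Sum>a\<in>U. q a k * q a k') * (\<Sum>b\<in>U. q b k * q b k')))"
    by (simp only: sum_product, simp only: sum_distrib_left)
  also have "\<dots> = (\<Sum>k\<in>R. \<Sum>k'\<in>R. if k = k' then \<mu> k * \<mu> k else 0)"
    by (rule sum.cong[OF refl], rule sum.cong[OF refl]) (use on in auto)
  also have "\<dots> = (\<Sum>k\<in>R. (\<mu> k)\<^sup>2)" using fR by (simp add: power2_eq_square)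
  finally show ?thesis .
qed

lemma ls_expand:
  fixes r :: "nat \<Rightarrow> real" and f :: "nat \<Rightarrow> nat \<Rightarrow> real" and \<beta> :: "nat \<Rightarrow> real"
  assumes fJ: "finite J"
    and on: "\<forall>j\<in>J. \<forall>j'\<in>J. (\<Sum>t\<in>U. f j t * f j' t) = (if j = j' then 1 else 0)"
  shows "(\<Sum>t\<in>U. (r t - (\<Sum>j\<in>J. \<beta> j * f j t))\<^sup>2)
     = (\<Sum>t\<in>U. (r t)\<^sup>2) - 2 * (\<Sum>j\<in>J. \<beta> j * (\<Sum>t\<in>U. r t * f j t)) + (\<Sum>j\<in>J. (\<beta> j)\<^sup>2)"
proof -
  have q: "(\<Sum>t\<in>U. (\<Sum>j\<in>J. \<beta> j * f j t)\<^sup>2) = (\<Sum>j\<in>J. (\<beta> j)\<^sup>2)"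
  proof -
    have "(\<Sum>t\<in>U. (\<Sum>j\<in>J. \<beta> j * f j t)\<^sup>2) = (\<Sum>t\<in>U. \<Sum>j\<in>J. \<Sum>j'\<in>J. \<beta> j * \<beta> j' * (f j t * f j' t))"
      unfolding power2_eq_square sum_product by (simp add: algebra_simps)
    also have "\<dots> = (\<Sum>j\<in>J. \<Sum>t\<in>U. \<Sum>j'\<in>J. \<beta> j * \<beta> j' * (f j t * f j' t))" by (rule sum.swap)
    also have "\<dots> = (\<Sum>j\<in>J. \<Sum>j'\<in>J. \<Sum>t\<in>U. \<beta> j * \<beta> j' * (f j t * f j' t))"
      by (rule sum.cong[OF refl], rule sum.swap)
    also have "\<dots> = (\<Sum>j\<in>J. \<Sum>j'\<in>J. \<beta> j * \<beta> j' * (\<Sum>t\<in>U. f j t * f j' t))"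
      by (simp add: sum_distrib_left)
    also have "\<dots> = (\<Sum>j\<in>J. \<Sum>j'\<in>J. if j = j' then \<beta> j * \<beta> j else 0)"
      by (rule sum.cong[OF refl], rule sum.cong[OF refl]) (use on in auto)
    also have "\<dots> = (\<Sum>j\<in>J. (\<beta> j)\<^sup>2)" using fJ by (simp add: power2_eq_square)
    finally show ?thesis .
  qed
  have m: "(\<Sum>t\<in>U. r t * (\<Sum>j\<in>J. \<beta> j * f j t)) = (\<Sum>j\<in>J. \<beta> j * (\<Sum>t\<in>U. r t * f j t))"
  proof -
    have "(\<Sum>t\<in>U. r t * (\<Sum>j\<in>J. \<beta> j * f j t)) = (\<Sum>t\<in>U. \<Sum>j\<in>J. \<beta> j * (r t * f j t))"
      by (simp add: sum_distrib_left algebra_simps)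
    also have "\<dots> = (\<Sum>j\<in>J. \<Sum>t\<in>U. \<beta> j * (r t * f j t))" by (rule sum.swap)
    finally show ?thesis by (simp add: sum_distrib_left)
  qed
  have "(\<Sum>t\<in>U. (r t - (\<Sum>j\<in>J. \<beta> j * f j t))\<^sup>2)
     = (\<Sum>t\<in>U. (r t)\<^sup>2) - 2 * (\<Sum>t\<in>U. r t * (\<Sum>j\<in>J. \<beta> j * f j t)) + (\<Sum>t\<in>U. (\<Sum>j\<in>J. \<beta> j * f j t)\<^sup>2)"
    by (simp add: power2_diff sum.distrib sum_subtractf sum_distrib_left mult.assoc)
  thus ?thesis unfolding q m .
qed

lemma ls_min:
  fixes r :: "nat \<Rightarrow> real" and f :: "nat \<Rightarrow> nat \<Rightarrow> real" and \<beta> :: "nat \<Rightarrow> real"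
  assumes fJ: "finite J"
    and on: "\<forall>j\<in>J. \<forall>j'\<in>J. (\<Sum>t\<in>U. f j t * f j' t) = (if j = j' then 1 else 0)"
  shows "(\<Sum>t\<in>U. (r t - (\<Sum>j\<in>J. (\<Sum>t'\<in>U. r t' * f j t') * f j t))\<^sup>2)
     \<le> (\<Sum>t\<in>U. (r t - (\<Sum>j\<in>J. \<beta> j * f j t))\<^sup>2)"
proof -
  define p where "p j = (\<Sum>t'\<in>U. r t' * f j t')" for j
  have "2 * (\<Sum>j\<in>J. \<beta> j * p j) \<le> (\<Sum>j\<in>J. (\<beta> j)\<^sup>2) + (\<Sum>j\<in>J. (p j)\<^sup>2)"
  proof -
    have "0 \<le> (\<Sum>j\<in>J. (\<beta> j - p j)\<^sup>2)" by (simp add: sum_nonneg)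
    also have "\<dots> = (\<Sum>j\<in>J. (\<beta> j)\<^sup>2) + (\<Sum>j\<in>J. (p j)\<^sup>2) - 2 * (\<Sum>j\<in>J. \<beta> j * p j)"
      by (simp add: power2_diff sum.distrib sum_subtractf sum_distrib_left mult.assoc)
    finally show ?thesis by simp
  qed
  thus ?thesis
    unfolding ls_expand[OF fJ on, of r] p_def[symmetric]
    by (simp add: power2_eq_square algebra_simps)
qed


definition sg :: "nat \<Rightarrow> real" where "sg j = (if j = 0 then 1 else -1)"



lemma back_lem:
  fixes q :: "nat \<Rightarrow> nat \<Rightarrow> real" and w :: "nat \<Rightarrow> real"
  assumes orth: "\<And>k k'. k < l \<Longrightarrow> k' < l \<Longrightarrow> (\<Sum>i<l. q i k * q i k') = (if k = k' then 1 else 0)"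
    and k': "k' < l"
  shows "(\<Sum>i<l. q i k' * (\<Sum>k<l. q i k * w k)) = w k'"
proof -
  have "(\<Sum>i<l. q i k' * (\<Sum>k<l. q i k * w k)) = (\<Sum>k<l. w k * (\<Sum>i<l. q i k * q i k'))"
    by (rule transfer_sum)
  also have "\<dots> = (\<Sum>k<l. if k = k' then w k' else 0)"
    by (rule sum.cong) (use orth k' in auto)
  also have "\<dots> = w k'" using k' by simp
  finally show ?thesis .
qed

lemma lower_bound:
  fixes q x :: "nat \<Rightarrow> nat \<Rightarrow> real" and lam :: "nat \<Rightarrow> real"
  assumes orth: "\<And>k k'. k < l \<Longrightarrow> k' < l \<Longrightarrow> (\<Sum>i<l. q i k * q i k') = (if k = k' then 1 else 0)"
    and sorted: "\<forall>i j. i \<le> j \<and> j < l \<longrightarrow> lam j \<le> lam i"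
  shows "(\<Sum>k\<in>{1..<l-d}. (lam k)\<^sup>2) \<le>
    (\<Sum>a<l. \<Sum>b<l. ((\<Sum>k<l. lam k * q a k * q b k) - (\<Sum>j<d+1. sg j * x a j * x b j))\<^sup>2)"
proof -
  define R where "R = {1..<l-d}"
  define Rp where "Rp = {k\<in>R. lam k > 0}"
  define Rn where "Rn = {k\<in>R. lam k < 0}"
  have fin: "finite Rp" "finite Rn" by (auto simp: Rp_def Rn_def R_def)
  have Rl: "k \<in> R \<Longrightarrow> k < l" for k by (auto simp: R_def)
  have sumR: "(\<Sum>k\<in>R. (lam k)\<^sup>2) = (\<Sum>k\<in>Rp \<union> Rn. (lam k)\<^sup>2)"
    by (rule sum.mono_neutral_right) (auto simp: R_def Rp_def Rn_def)
  define c where "c j k = (\<Sum>i<l. q i k * x i j)" for j k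
  define U where "U = {..<l::nat}"
  have fU: "finite U" by (simp add: U_def)
  have "\<exists>w. \<forall>i\<in>Rp. (\<forall>k. k \<notin> {..i} \<longrightarrow> w i k = 0) \<and> (\<Sum>k\<in>U. (w i k)\<^sup>2) = 1 \<and>
        (\<forall>cc\<in>set [c 0]. (\<Sum>k\<in>U. cc k * w i k) = 0) \<and>
        (\<forall>j\<in>Rp. j \<noteq> i \<longrightarrow> (\<Sum>k\<in>U. w i k * w j k) = 0)"
  proof (rule chain[OF fU fin(1)])
    show "inj_on id Rp" by simp
    show "\<forall>i\<in>Rp. {..i} \<subseteq> U \<and> length [c 0] + card {j \<in> Rp. id j < id i} < card {..i}"
    proof
      fix i assume i: "i \<in> Rp"
      have "card {j \<in> Rp. id j < id i} \<le> card {1..<i}"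
        by (rule card_mono) (auto simp: Rp_def R_def)
      moreover have "i \<ge> 1" "i < l" using i Rl by (auto simp: Rp_def R_def)
      ultimately show "{..i} \<subseteq> U \<and> length [c 0] + card {j \<in> Rp. id j < id i} < card {..i}"
        by (auto simp: U_def)
    qed
  qed
  then obtain wp where wp: "\<forall>i\<in>Rp. (\<forall>k. k \<notin> {..i} \<longrightarrow> wp i k = 0) \<and> (\<Sum>k\<in>U. (wp i k)\<^sup>2) = 1 \<and>
        (\<Sum>k\<in>U. c 0 k * wp i k) = 0 \<and>
        (\<forall>j\<in>Rp. j \<noteq> i \<longrightarrow> (\<Sum>k\<in>U. wp i k * wp j k) = 0)" by auto
  have "\<exists>w. \<forall>i\<in>Rn. (\<forall>k. k \<notin> {i..<l} \<longrightarrow> w i k = 0) \<and> (\<Sum>k\<in>U. (w i k)\<^sup>2) = 1 \<and>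
        (\<forall>cc\<in>set (map (\<lambda>j. c (Suc j)) [0..<d]). (\<Sum>k\<in>U. cc k * w i k) = 0) \<and>
        (\<forall>j\<in>Rn. j \<noteq> i \<longrightarrow> (\<Sum>k\<in>U. w i k * w j k) = 0)"
  proof (rule chain[OF fU fin(2)])
    show "inj_on (\<lambda>k. l - k) Rn"
      by (rule inj_onI) (auto simp: Rn_def R_def)
    show "\<forall>i\<in>Rn. {i..<l} \<subseteq> U \<and> length (map (\<lambda>j. c (Suc j)) [0..<d]) + card {j \<in> Rn. l - j < l - i} < card {i..<l}"
    proof
      fix i assume i: "i \<in> Rn"
      have il: "i < l - d" using i by (auto simp: Rn_def R_def)
      have "card {j \<in> Rn. l - j < l - i} \<le> card {Suc i..<l-d}"
        by (rule card_mono) (auto simp: Rn_def R_def)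
      hence "card {j \<in> Rn. l - j < l - i} \<le> l - d - Suc i" by simp
      with il show "{i..<l} \<subseteq> U \<and> length (map (\<lambda>j. c (Suc j)) [0..<d]) + card {j \<in> Rn. l - j < l - i} < card {i..<l}"
        by (auto simp: U_def)
    qed
  qed
  then obtain wn where wn: "\<forall>i\<in>Rn. (\<forall>k. k \<notin> {i..<l} \<longrightarrow> wn i k = 0) \<and> (\<Sum>k\<in>U. (wn i k)\<^sup>2) = 1 \<and>
        (\<forall>j\<in>{0..<d}. (\<Sum>k\<in>U. c (Suc j) k * wn i k) = 0) \<and>
        (\<forall>j\<in>Rn. j \<noteq> i \<longrightarrow> (\<Sum>k\<in>U. wn i k * wn j k) = 0)" by auto
  define w where "w i = (if lam i > 0 then wp i else wn i)" for i
  define I where "I = Rp \<union> Rn"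
  have disj: "i \<in> Rp \<Longrightarrow> j \<in> Rn \<Longrightarrow> i < j" for i j
  proof (rule ccontr)
    assume "i \<in> Rp" "j \<in> Rn" "\<not> i < j"
    hence "lam i \<le> lam j" "i < l" using sorted Rl by (auto simp: Rp_def Rn_def)
    thus False using \<open>i \<in> Rp\<close> \<open>j \<in> Rn\<close> by (auto simp: Rp_def Rn_def)
  qed
  have cross: "(\<Sum>k\<in>U. wp i k * wn j k) = 0" if "i \<in> Rp" "j \<in> Rn" for i j
  proof -
    have "wp i k * wn j k = 0" for k
    proof (cases "k \<le> i")
      case True
      hence "k \<notin> {j..<l}" using disj[OF that] by auto
      thus ?thesis using wn that(2) by auto
    next
      case False thus ?thesis using wp that(1) by auto
    qed
    thus ?thesis by (simp del: mult_eq_0_iff)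
  qed
  have won: "\<forall>a\<in>I. \<forall>b\<in>I. (\<Sum>k\<in>U. w a k * w b k) = (if a = b then 1 else 0)"
  proof (intro ballI)
    fix a b assume a: "a \<in> I" and b: "b \<in> I"
    show "(\<Sum>k\<in>U. w a k * w b k) = (if a = b then 1 else 0)"
    proof (cases "a = b")
      case True
      thus ?thesis using a wp wn by (auto simp: w_def I_def Rp_def Rn_def power2_eq_square)
    next
      case False
      show ?thesis
      proof (cases "a \<in> Rp")
        case aP: True
        show ?thesis
        proof (cases "b \<in> Rp")
          case True thus ?thesis using aP False wp by (auto simp: w_def Rp_def)
        next
          case bN: False
          hence "b \<in> Rn" using b by (auto simp: I_def)
          thus ?thesis using aP cross False by (auto simp: w_def Rp_def Rn_def)
        qed
      next
        case aN: False
        hence aN': "a \<in> Rn" using a by (auto simp: I_def)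
        show ?thesis
        proof (cases "b \<in> Rp")
          case True thus ?thesis using aN' cross[of b a] False
            by (auto simp: w_def Rp_def Rn_def mult.commute)
        next
          case bN: False
          hence "b \<in> Rn" using b by (auto simp: I_def)
          thus ?thesis using aN' wn False by (auto simp: w_def Rp_def Rn_def)
        qed
      qed
    qed
  qed
  define z where "z a i = (\<Sum>k<l. q i k * w a k)" for a i
  have zback: "(\<Sum>i<l. q i k' * z a i) = w a k'" if "k' < l" for a k'
    unfolding z_def by (rule back_lem[OF orth that])
  have zon: "\<forall>a\<in>I. \<forall>b\<in>I. (\<Sum>i\<in>U. z a i * z b i) = (if a = b then 1 else 0)"
  proof (intro ballI)
    fix a b assume "a \<in> I" "b \<in> I"
    have "(\<Sum>i\<in>U. z a i * z b i) = (\<Sum>k<l. w b k * (\<Sum>i<l. q i k * z a i))"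
      unfolding U_def z_def[of b] by (rule transfer_sum)
    also have "\<dots> = (\<Sum>k\<in>U. w a k * w b k)"
      unfolding U_def by (rule sum.cong) (simp_all add: zback mult.commute)
    finally show "(\<Sum>i\<in>U. z a i * z b i) = (if a = b then 1 else 0)"
      using won \<open>a \<in> I\<close> \<open>b \<in> I\<close> by simp
  qed
  define C where "C a b = (\<Sum>k<l. lam k * q a k * q b k) - (\<Sum>j<d+1. sg j * x a j * x b j)" for a b
  have xz: "(\<Sum>i<l. x i j * z a i) = (\<Sum>k<l. w a k * c j k)" for a j
    unfolding z_def c_def by (rule transfer_sum)
  have quad: "(\<Sum>i\<in>U. \<Sum>j\<in>U. C i j * z a i * z a j)
      = (\<Sum>k<l. lam k * (w a k)\<^sup>2) - (\<Sum>j<d+1. sg j * (\<Sum>k<l. w a k * c j k)\<^sup>2)" for a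
  proof -
    have "(\<Sum>i\<in>U. \<Sum>j\<in>U. C i j * z a i * z a j)
       = (\<Sum>i\<in>U. \<Sum>j\<in>U. (\<Sum>k<l. lam k * q i k * q j k) * z a i * z a j)
         - (\<Sum>i\<in>U. \<Sum>j\<in>U. (\<Sum>t<d+1. sg t * x i t * x j t) * z a i * z a j)"
      unfolding C_def by (simp add: left_diff_distrib sum_subtractf)
    also have "\<dots> = (\<Sum>k<l. lam k * (\<Sum>i\<in>U. q i k * z a i)\<^sup>2) - (\<Sum>t<d+1. sg t * (\<Sum>i\<in>U. x i t * z a i)\<^sup>2)"
      using qf[where \<alpha>=lam and p="\<lambda>t i. q i t" and z="z a" and U=U and T="{..<l}"]
        qf[where \<alpha>=sg and p="\<lambda>t i. x i t" and z="z a" and U=U and T="{..<d+1}"]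
      by simp
    also have "\<dots> = (\<Sum>k<l. lam k * (w a k)\<^sup>2) - (\<Sum>j<d+1. sg j * (\<Sum>k<l. w a k * c j k)\<^sup>2)"
      unfolding U_def xz by (simp add: zback)
    finally show ?thesis .
  qed
  have sgsplit: "(\<Sum>j<d+1. sg j * f j) = f 0 - (\<Sum>j<d. f (Suc j))" for f :: "nat \<Rightarrow> real"
    by (simp only: Suc_eq_plus1[symmetric] sum.lessThan_Suc_shift) (simp add: sg_def sum_negf)
  have pw: "(lam a)\<^sup>2 \<le> (\<Sum>i\<in>U. \<Sum>j\<in>U. C i j * z a i * z a j)\<^sup>2" if a: "a \<in> I" for a
  proof (cases "a \<in> Rp")
    case True
    have al: "a < l" using True Rl by (auto simp: Rp_def)
    have wa: "w a = wp a" using True by (auto simp: w_def Rp_def)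
    have c0: "(\<Sum>k<l. w a k * c 0 k) = 0" using wp True wa by (auto simp: U_def mult.commute)
    have "(\<Sum>j<d+1. sg j * (\<Sum>k<l. w a k * c j k)\<^sup>2) \<le> 0"
      unfolding sgsplit c0 by (simp add: sum_nonneg)
    moreover have "lam a \<le> (\<Sum>k<l. lam k * (w a k)\<^sup>2)"
    proof -
      have "(\<Sum>k<l. lam a * (w a k)\<^sup>2) \<le> (\<Sum>k<l. lam k * (w a k)\<^sup>2)"
      proof (rule sum_mono)
        fix k assume k: "k \<in> {..<l}"
        show "lam a * (w a k)\<^sup>2 \<le> lam k * (w a k)\<^sup>2"
        proof (cases "k \<le> a")
          case True thus ?thesis using sorted al by (intro mult_right_mono) auto
        next
          case False thus ?thesis using wp \<open>a \<in> Rp\<close> wa by auto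
        qed
      qed
      moreover have "(\<Sum>k<l. lam a * (w a k)\<^sup>2) = lam a"
        using wp True wa by (simp add: sum_distrib_left[symmetric] U_def)
      ultimately show ?thesis by simp
    qed
    moreover have "lam a > 0" using True by (simp add: Rp_def)
    ultimately show ?thesis unfolding quad by (intro power_mono) auto
  next
    case False
    hence aN: "a \<in> Rn" using a by (auto simp: I_def)
    have al: "a < l" using aN Rl by (auto simp: Rn_def)
    have wa: "w a = wn a" using aN by (auto simp: w_def Rn_def)
    have cj: "(\<Sum>k<l. w a k * c (Suc j) k) = 0" if "j < d" for j
      using wn aN wa that by (auto simp: U_def mult.commute)
    have "(\<Sum>j<d+1. sg j * (\<Sum>k<l. w a k * c j k)\<^sup>2) \<ge> 0"
      unfolding sgsplit using cj by simp
    moreover have "(\<Sum>k<l. lam k * (w a k)\<^sup>2) \<le> lam a"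
    proof -
      have "(\<Sum>k<l. lam k * (w a k)\<^sup>2) \<le> (\<Sum>k<l. lam a * (w a k)\<^sup>2)"
      proof (rule sum_mono)
        fix k assume k: "k \<in> {..<l}"
        show "lam k * (w a k)\<^sup>2 \<le> lam a * (w a k)\<^sup>2"
        proof (cases "a \<le> k")
          case True thus ?thesis using sorted k by (intro mult_right_mono) auto
        next
          case False thus ?thesis using wn aN wa by auto
        qed
      qed
      moreover have "(\<Sum>k<l. lam a * (w a k)\<^sup>2) = lam a"
        using wn aN wa by (simp add: sum_distrib_left[symmetric] U_def)
      ultimately show ?thesis by simp
    qed
    moreover have "lam a < 0" using aN by (simp add: Rn_def)
    ultimately have "\<bar>lam a\<bar> \<le> \<bar>\<Sum>i\<in>U. \<Sum>j\<in>U. C i j * z a i * z a j\<bar>"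
      unfolding quad by linarith
    thus ?thesis by (simp add: abs_le_square_iff)
  qed
  have finI: "finite I" using fin by (simp add: I_def)
  have "(\<Sum>k\<in>{1..<l-d}. (lam k)\<^sup>2) = (\<Sum>a\<in>I. (lam a)\<^sup>2)" using sumR by (simp add: R_def I_def)
  also have "\<dots> \<le> (\<Sum>a\<in>I. (\<Sum>i\<in>U. \<Sum>j\<in>U. C i j * z a i * z a j)\<^sup>2)"
    by (rule sum_mono) (rule pw)
  also have "\<dots> \<le> (\<Sum>i\<in>U. \<Sum>j\<in>U. (C i j)\<^sup>2)"
    by (rule bessel[OF finI fU zon])
  finally show ?thesis by (simp add: U_def C_def)
qed



lemma mult_ent:
  fixes A B :: "real mat"
  assumes "A \<in> carrier_mat n k" "B \<in> carrier_mat k p" "i < n" "j < p"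
  shows "(A * B) $$ (i,j) = (\<Sum>t<k. A $$ (i,t) * B $$ (t,j))"
  using assms by (simp add: scalar_prod_def atLeast0LessThan)

lemma XJY_ent:
  fixes X Y :: "real mat"
  assumes X: "X \<in> carrier_mat n (d+1)" and Y: "Y \<in> carrier_mat p (d+1)" and a: "a < n" and b: "b < p"
  shows "(X * lorentz_J d * transpose_mat Y) $$ (a,b) = (\<Sum>j<d+1. sg j * X $$ (a,j) * Y $$ (b,j))"
proof -
  have J: "lorentz_J d \<in> carrier_mat (d+1) (d+1)" by (simp add: lorentz_J_def)
  have XJ: "X * lorentz_J d \<in> carrier_mat n (d+1)" using X J by simp
  have XJe: "(X * lorentz_J d) $$ (a,j) = sg j * X $$ (a,j)" if j: "j < d+1" for j
  proof -
    have "(X * lorentz_J d) $$ (a,j) = (\<Sum>t<d+1. X $$ (a,t) * lorentz_J d $$ (t,j))"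
      by (rule mult_ent[OF X J a j])
    also have "\<dots> = (\<Sum>t<d+1. if t = j then X $$ (a,j) * sg j else 0)"
      by (rule sum.cong) (use j in \<open>auto simp: lorentz_J_def sg_def\<close>)
    also have "\<dots> = sg j * X $$ (a,j)" using j by simp
    finally show ?thesis .
  qed
  have "(X * lorentz_J d * transpose_mat Y) $$ (a,b) = (\<Sum>t<d+1. (X * lorentz_J d) $$ (a,t) * transpose_mat Y $$ (t,b))"
    by (rule mult_ent[OF XJ _ a b]) (use Y in simp)
  also have "\<dots> = (\<Sum>j<d+1. sg j * X $$ (a,j) * Y $$ (b,j))"
    by (rule sum.cong) (use Y b XJe in auto)
  finally show ?thesis .
qed

lemma frob_eq:
  assumes "M \<in> carrier_mat n p"
  shows "frob_norm M = sqrt (\<Sum>i<n. \<Sum>j<p. (M $$ (i,j))\<^sup>2)"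
  using assms by (simp add: frob_norm_def)

theorem theorem2:
  fixes DL DN :: "real mat" and l m d :: nat and \<kappa> :: real
    and Q :: "real mat" and lam :: "nat \<Rightarrow> real"
  assumes DL: "DL \<in> carrier_mat l l" "transpose_mat DL = DL"
      "\<forall>i<l. DL $$ (i,i) = 0" "\<forall>i<l. \<forall>j<l. DL $$ (i,j) \<ge> 0"
    and DN: "DN \<in> carrier_mat m l" "\<forall>i<m. \<forall>j<l. DN $$ (i,j) \<ge> 0"
    and d: "d \<ge> 1" and kappa: "\<kappa> > 0"
    and eig: "lhydra_eigdecomp l (cosh_mat \<kappa> DL) Q lam"
    and neg: "card {i. i < l \<and> lam i < 0} \<ge> d"
  shows "\<exists>XL XN. lhydra DL DN d \<kappa> Q lam = Some (XL, XN) \<and>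
    XL \<in> carrier_mat l (d+1) \<and> XN \<in> carrier_mat m (d+1) \<and>
    (\<forall>X \<in> carrier_mat l (d+1).
       frob_norm (cosh_mat \<kappa> DL - XL * lorentz_J d * transpose_mat XL)
       \<le> frob_norm (cosh_mat \<kappa> DL - X * lorentz_J d * transpose_mat X)) \<and>
    (\<forall>X \<in> carrier_mat m (d+1).
       frob_norm (cosh_mat \<kappa> DN - XN * lorentz_J d * transpose_mat XL)
       \<le> frob_norm (cosh_mat \<kappa> DN - X * lorentz_J d * transpose_mat XL)) \<and>
    (\<forall>i<l. XL $$ (i,0) > 0) \<and> (\<forall>i<m. XN $$ (i,0) > 0)"
proof -
  define A where "A = cosh_mat \<kappa> DL"
  define AN where "AN = cosh_mat \<kappa> DN"
  have Qc: "Q \<in> carrier_mat l l" and QQ: "transpose_mat Q * Q = 1\<^sub>m l"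
    and Adec: "A = Q * diag_of l lam * transpose_mat Q"
    and sorted: "\<forall>i j. i \<le> j \<and> j < l \<longrightarrow> lam j \<le> lam i" and Qpos: "\<forall>i<l. Q $$ (i,0) > 0"
    using eig unfolding lhydra_eigdecomp_def A_def by auto
  have orth: "(\<Sum>i<l. Q $$ (i,k) * Q $$ (i,k')) = (if k = k' then 1 else 0)" if "k < l" "k' < l" for k k'
  proof -
    have "(transpose_mat Q * Q) $$ (k,k') = (\<Sum>i<l. transpose_mat Q $$ (k,i) * Q $$ (i,k'))"
      by (rule mult_ent) (use Qc that in auto)
    also have "\<dots> = (\<Sum>i<l. Q $$ (i,k) * Q $$ (i,k'))" by (rule sum.cong) (use Qc that in auto)
    finally show ?thesis using QQ that by simp
  qed
  have Dc: "diag_of l lam \<in> carrier_mat l l" by (simp add: diag_of_def)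
  have Aent: "A $$ (a,b) = (\<Sum>k<l. lam k * Q $$ (a,k) * Q $$ (b,k))" if ab: "a < l" "b < l" for a b
  proof -
    have QD: "(Q * diag_of l lam) $$ (a,k) = lam k * Q $$ (a,k)" if "k < l" for k
    proof -
      have "(Q * diag_of l lam) $$ (a,k) = (\<Sum>t<l. Q $$ (a,t) * diag_of l lam $$ (t,k))"
        by (rule mult_ent[OF Qc Dc]) (use ab that in auto)
      also have "\<dots> = (\<Sum>t<l. if t = k then Q $$ (a,k) * lam k else 0)"
        by (rule sum.cong) (use that in \<open>auto simp: diag_of_def\<close>)
      finally show ?thesis using that by simp
    qed
    have "A $$ (a,b) = (\<Sum>k<l. (Q * diag_of l lam) $$ (a,k) * transpose_mat Q $$ (k,b))"
      unfolding Adec by (rule mult_ent) (use Qc Dc ab in auto)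
    also have "\<dots> = (\<Sum>k<l. lam k * Q $$ (a,k) * Q $$ (b,k))"
      by (rule sum.cong) (use QD Qc ab in auto)
    finally show ?thesis .
  qed
  have Ac: "A \<in> carrier_mat l l" using DL(1) by (simp add: A_def cosh_mat_def)
  have Adiag: "A $$ (a,a) = 1" if "a < l" for a using DL(1,3) that by (simp add: A_def cosh_mat_def)
  have trace: "(\<Sum>k<l. lam k) = real l"
  proof -
    have "real l = (\<Sum>a<l. A $$ (a,a))" using Adiag by simp
    also have "\<dots> = (\<Sum>a<l. \<Sum>k<l. lam k * (Q $$ (a,k) * Q $$ (a,k)))"
      by (rule sum.cong) (simp_all add: Aent mult.assoc)
    also have "\<dots> = (\<Sum>k<l. lam k * (\<Sum>a<l. Q $$ (a,k) * Q $$ (a,k)))"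
      by (subst sum.swap) (simp add: sum_distrib_left)
    also have "\<dots> = (\<Sum>k<l. lam k)" by (rule sum.cong) (simp_all add: orth)
    finally show ?thesis by simp
  qed
  have l1: "l \<ge> 1"
  proof (rule ccontr)
    assume "\<not> l \<ge> 1" hence "l = 0" by simp
    hence "card {i. i < l \<and> lam i < 0} = 0" by simp
    thus False using neg d by linarith
  qed
  have lam0: "lam 0 > 0"
  proof -
    have "(\<Sum>k<l. lam k) \<le> (\<Sum>k<l. lam 0)" by (rule sum_mono) (use sorted in auto)
    hence "real l * 1 \<le> real l * lam 0" using trace by simp
    hence "1 \<le> lam 0" using l1 by (subst (asm) mult_le_cancel_left_pos) auto
    thus ?thesis by simp
  qed
  have negs: "lam k < 0" if kk: "l - d \<le> k" "k < l" for k
  proof (rule ccontr)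
    assume nk: "\<not> lam k < 0"
    have "{i. i < l \<and> lam i < 0} \<subseteq> {k<..<l}"
    proof
      fix i assume i: "i \<in> {i. i < l \<and> lam i < 0}"
      have "\<not> i \<le> k"
      proof
        assume "i \<le> k" hence "lam k \<le> lam i" using sorted kk by auto
        thus False using nk i by simp
      qed
      thus "i \<in> {k<..<l}" using i by simp
    qed
    hence "card {i. i < l \<and> lam i < 0} \<le> card {k<..<l}" by (rule card_mono[rotated]) simp
    hence "card {i. i < l \<and> lam i < 0} \<le> l - Suc k" by simp
    with neg kk show False by linarith
  qed
  have ld: "d + 1 \<le> l"
  proof (rule ccontr)
    assume "\<not> d + 1 \<le> l"
    hence "l - d \<le> 0" by simp
    hence "lam 0 < 0" using negs l1 by simp
    thus False using lam0 by simp
  qed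
  define kj where "kj j = (if j = 0 then 0 else neg_idx l d j)" for j
  define cf where "cf j = (if j = 0 then sqrt (lam 0) else sqrt (- lam (kj j)))" for j
  have kjl: "kj j < l" if "j < d+1" for j using that l1 ld by (auto simp: kj_def neg_idx_def)
  have kjneg: "lam (kj j) < 0" if "j < d+1" "j \<noteq> 0" for j
    using that ld by (intro negs) (auto simp: kj_def neg_idx_def)
  have cfpos: "cf j > 0" if "j < d+1" for j
    using that lam0 kjneg by (auto simp: cf_def)
  have lamkj: "sg j * (cf j)\<^sup>2 = lam (kj j)" if "j < d+1" for j
    using that lam0 kjneg[of j] by (auto simp: cf_def sg_def kj_def)
  have sgsq: "sg j * sg j = 1" for j by (simp add: sg_def)
  have kjinj: "inj_on kj {..<d+1}"
    by (rule inj_onI) (use ld in \<open>auto simp: kj_def neg_idx_def split: if_splits\<close>)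
  define K where "K = kj ` {..<d+1}"
  define R where "R = {1..<l-d}"
  have Kset: "K = {0} \<union> {l-d..<l}"
  proof
    show "K \<subseteq> {0} \<union> {l-d..<l}" using ld by (auto simp: K_def kj_def neg_idx_def)
    show "{0} \<union> {l-d..<l} \<subseteq> K"
    proof
      fix k assume k: "k \<in> {0} \<union> {l-d..<l}"
      show "k \<in> K"
      proof (cases "k = 0")
        case True
        have h1: "k = kj 0" using True by (simp add: kj_def)
        have "kj 0 \<in> K" unfolding K_def by (intro imageI) simp
        thus ?thesis using h1 by simp
      next
        case False
        have h1: "k = kj (k - (l - d - 1))" and h2: "k - (l - d - 1) < d + 1"
          using k ld False by (auto simp: kj_def neg_idx_def)
        have "kj (k - (l - d - 1)) \<in> K" unfolding K_def using h2 by (intro imageI) simp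
        thus ?thesis using h1 by simp
      qed
    qed
  qed
  have RK: "{..<l} = R \<union> K" "R \<inter> K = {}" using Kset ld by (auto simp: R_def)
  define XL where "XL = mat l (d+1) (\<lambda>(i,j). if j = 0 then sqrt (lam 0) * Q $$ (i,0)
                            else sqrt (- lam (neg_idx l d j)) * Q $$ (i, neg_idx l d j))"
  define Y where "Y = mat l (d+1) (\<lambda>(i,j). if j = 0 then Q $$ (i,0) / sqrt (lam 0)
                            else - Q $$ (i, neg_idx l d j) / sqrt (- lam (neg_idx l d j)))"
  define XN where "XN = AN * Y"
  have hyd: "lhydra DL DN d \<kappa> Q lam = Some (XL, XN)"
    unfolding lhydra_def Let_def XL_def XN_def Y_def AN_def using DL(1) ld negs by auto
  have XLc: "XL \<in> carrier_mat l (d+1)" by (simp add: XL_def)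
  have Yc: "Y \<in> carrier_mat l (d+1)" by (simp add: Y_def)
  have ANc: "AN \<in> carrier_mat m l" using DN(1) by (simp add: AN_def cosh_mat_def)
  have XNc: "XN \<in> carrier_mat m (d+1)" using ANc Yc by (simp add: XN_def)
  have XLe: "XL $$ (i,j) = cf j * Q $$ (i, kj j)" if "i < l" "j < d+1" for i j
    using that by (simp add: XL_def cf_def kj_def)
  have Ye: "Y $$ (i,j) = sg j * Q $$ (i, kj j) / cf j" if "i < l" "j < d+1" for i j
    using that by (simp add: Y_def cf_def kj_def sg_def)
  have XNe: "XN $$ (i,j) = sg j * (\<Sum>t<l. AN $$ (i,t) * Q $$ (t, kj j)) / cf j" if "i < m" "j < d+1" for i j
  proof -
    have "XN $$ (i,j) = (\<Sum>t<l. AN $$ (i,t) * Y $$ (t,j))"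
      unfolding XN_def by (rule mult_ent[OF ANc Yc that])
    also have "\<dots> = (\<Sum>t<l. sg j * (AN $$ (i,t) * Q $$ (t, kj j)) / cf j)"
      by (rule sum.cong) (use that Ye in auto)
    finally show ?thesis by (simp add: sum_divide_distrib[symmetric] sum_distrib_left[symmetric])
  qed
  have ANe: "AN $$ (i,t) > 0" if "i < m" "t < l" for i t
    using that DN(1) by (simp add: AN_def cosh_mat_def)
  have orthK: "\<forall>j\<in>{..<d+1}. \<forall>j'\<in>{..<d+1}. (\<Sum>t\<in>{..<l}. Q $$ (t, kj j) * Q $$ (t, kj j')) = (if j = j' then 1 else 0)"
    using orth kjl kjinj by (auto simp: inj_on_eq_iff)
  have residL: "(A - XL * lorentz_J d * transpose_mat XL) $$ (a,b) = (\<Sum>k\<in>R. lam k * Q $$ (a,k) * Q $$ (b,k))"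
    if ab: "a < l" "b < l" for a b
  proof -
    have "(A - XL * lorentz_J d * transpose_mat XL) $$ (a,b) = A $$ (a,b) - (XL * lorentz_J d * transpose_mat XL) $$ (a,b)"
      using ab XLc by simp
    also have "(XL * lorentz_J d * transpose_mat XL) $$ (a,b) = (\<Sum>j<d+1. sg j * XL $$ (a,j) * XL $$ (b,j))"
      by (rule XJY_ent[OF XLc XLc ab])
    also have "\<dots> = (\<Sum>j<d+1. lam (kj j) * Q $$ (a,kj j) * Q $$ (b,kj j))"
      by (rule sum.cong) (use ab XLe lamkj in \<open>auto simp: power2_eq_square algebra_simps\<close>)
    also have "\<dots> = (\<Sum>k\<in>K. lam k * Q $$ (a,k) * Q $$ (b,k))"
      unfolding K_def by (rule sum.reindex[OF kjinj, symmetric, unfolded comp_def])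
    also have "A $$ (a,b) = (\<Sum>k\<in>R. lam k * Q $$ (a,k) * Q $$ (b,k)) + (\<Sum>k\<in>K. lam k * Q $$ (a,k) * Q $$ (b,k))"
      unfolding Aent[OF ab] RK(1) by (rule sum.union_disjoint) (use RK(2) in \<open>auto simp: R_def K_def\<close>)
    finally show ?thesis by simp
  qed
  have finR: "finite R" by (simp add: R_def)
  have orthR: "\<forall>k\<in>R. \<forall>k'\<in>R. (\<Sum>a\<in>{..<l}. Q $$ (a,k) * Q $$ (a,k')) = (if k = k' then 1 else 0)"
    using orth by (auto simp: R_def)
  have frobL: "frob_norm (A - XL * lorentz_J d * transpose_mat XL) = sqrt (\<Sum>k\<in>R. (lam k)\<^sup>2)"
  proof -
    have c: "A - XL * lorentz_J d * transpose_mat XL \<in> carrier_mat l l" using XLc by (intro carrier_matI) auto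
    have "frob_norm (A - XL * lorentz_J d * transpose_mat XL)
        = sqrt (\<Sum>a<l. \<Sum>b<l. (\<Sum>k\<in>R. lam k * Q $$ (a,k) * Q $$ (b,k))\<^sup>2)"
      unfolding frob_eq[OF c] by (simp add: residL)
    also have "\<dots> = sqrt (\<Sum>k\<in>R. (lam k)\<^sup>2)"
      using sq_expand[where \<mu>=lam and q="\<lambda>a k. Q $$ (a,k)" and U="{..<l}", OF finR orthR] by simp
    finally show ?thesis .
  qed
  have partI: "frob_norm (A - XL * lorentz_J d * transpose_mat XL) \<le> frob_norm (A - X * lorentz_J d * transpose_mat X)"
    if X: "X \<in> carrier_mat l (d+1)" for X
  proof -
    have c: "A - X * lorentz_J d * transpose_mat X \<in> carrier_mat l l" using X by (intro carrier_matI) auto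
    have "frob_norm (A - X * lorentz_J d * transpose_mat X)
       = sqrt (\<Sum>a<l. \<Sum>b<l. ((\<Sum>k<l. lam k * Q $$ (a,k) * Q $$ (b,k)) - (\<Sum>j<d+1. sg j * X $$ (a,j) * X $$ (b,j)))\<^sup>2)"
    proof -
      have entX: "(A - X * lorentz_J d * transpose_mat X) $$ (a,b) = (\<Sum>k<l. lam k * Q $$ (a,k) * Q $$ (b,k)) - (\<Sum>j<d+1. sg j * X $$ (a,j) * X $$ (b,j))"
        if ab: "a < l" "b < l" for a b
      proof -
        have "(A - X * lorentz_J d * transpose_mat X) $$ (a,b) = A $$ (a,b) - (X * lorentz_J d * transpose_mat X) $$ (a,b)"
          using ab X by simp
        thus ?thesis unfolding XJY_ent[OF X X ab] Aent[OF ab] .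
      qed
      show ?thesis unfolding frob_eq[OF c]
        by (rule arg_cong[where f=sqrt], rule sum.cong[OF refl], rule sum.cong[OF refl]) (simp only: entX lessThan_iff)
    qed
    moreover have "(\<Sum>k\<in>R. (lam k)\<^sup>2) \<le> (\<Sum>a<l. \<Sum>b<l. ((\<Sum>k<l. lam k * Q $$ (a,k) * Q $$ (b,k)) - (\<Sum>j<d+1. sg j * X $$ (a,j) * X $$ (b,j)))\<^sup>2)"
      unfolding R_def by (rule lower_bound[where q="\<lambda>a k. Q $$ (a,k)" and x="\<lambda>a j. X $$ (a,j)", OF orth sorted])
    ultimately show ?thesis unfolding frobL by simp
  qed
  have partII: "frob_norm (AN - XN * lorentz_J d * transpose_mat XL) \<le> frob_norm (AN - X * lorentz_J d * transpose_mat XL)"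
    if X: "X \<in> carrier_mat m (d+1)" for X
  proof -
    have c1: "AN - XN * lorentz_J d * transpose_mat XL \<in> carrier_mat m l" using XNc XLc by (intro carrier_matI) auto
    have c2: "AN - X * lorentz_J d * transpose_mat XL \<in> carrier_mat m l" using X XLc by (intro carrier_matI) auto
    have e1: "(AN - XN * lorentz_J d * transpose_mat XL) $$ (i,t) = AN $$ (i,t) - (\<Sum>j\<in>{..<d+1}. (\<Sum>t'\<in>{..<l}. AN $$ (i,t') * Q $$ (t', kj j)) * Q $$ (t, kj j))"
      if it: "i < m" "t < l" for i t
    proof -
      have "(XN * lorentz_J d * transpose_mat XL) $$ (i,t) = (\<Sum>j<d+1. sg j * XN $$ (i,j) * XL $$ (t,j))"
        by (rule XJY_ent[OF XNc XLc it])
      also have "\<dots> = (\<Sum>j\<in>{..<d+1}. (\<Sum>t'\<in>{..<l}. AN $$ (i,t') * Q $$ (t', kj j)) * Q $$ (t, kj j))"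
      proof (rule sum.cong[OF refl])
        fix j assume j: "j \<in> {..<d+1}"
        have "cf j \<noteq> 0" using cfpos j by (metis lessThan_iff less_irrefl)
        thus "sg j * XN $$ (i,j) * XL $$ (t,j) = (\<Sum>t'\<in>{..<l}. AN $$ (i,t') * Q $$ (t', kj j)) * Q $$ (t, kj j)"
          using it j XNe XLe sgsq[of j] by (simp add: field_simps)
      qed
      moreover have "(AN - XN * lorentz_J d * transpose_mat XL) $$ (i,t) = AN $$ (i,t) - (XN * lorentz_J d * transpose_mat XL) $$ (i,t)"
        using it XNc XLc by simp
      ultimately show ?thesis by simp
    qed
    have e2: "(AN - X * lorentz_J d * transpose_mat XL) $$ (i,t) = AN $$ (i,t) - (\<Sum>j\<in>{..<d+1}. (sg j * X $$ (i,j) * cf j) * Q $$ (t, kj j))"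
      if it: "i < m" "t < l" for i t
    proof -
      have "(X * lorentz_J d * transpose_mat XL) $$ (i,t) = (\<Sum>j<d+1. sg j * X $$ (i,j) * XL $$ (t,j))"
        by (rule XJY_ent[OF X XLc it])
      also have "\<dots> = (\<Sum>j\<in>{..<d+1}. (sg j * X $$ (i,j) * cf j) * Q $$ (t, kj j))"
        by (rule sum.cong) (use it XLe in auto)
      moreover have "(AN - X * lorentz_J d * transpose_mat XL) $$ (i,t) = AN $$ (i,t) - (X * lorentz_J d * transpose_mat XL) $$ (i,t)"
        using it X XLc by simp
      ultimately show ?thesis by simp
    qed
    have "(\<Sum>i<m. \<Sum>t<l. ((AN - XN * lorentz_J d * transpose_mat XL) $$ (i,t))\<^sup>2)
        \<le> (\<Sum>i<m. \<Sum>t<l. ((AN - X * lorentz_J d * transpose_mat XL) $$ (i,t))\<^sup>2)"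
    proof (rule sum_mono)
      fix i assume i: "i \<in> {..<m}"
      have "(\<Sum>t<l. ((AN - XN * lorentz_J d * transpose_mat XL) $$ (i,t))\<^sup>2)
          = (\<Sum>t\<in>{..<l}. (AN $$ (i,t) - (\<Sum>j\<in>{..<d+1}. (\<Sum>t'\<in>{..<l}. AN $$ (i,t') * Q $$ (t', kj j)) * Q $$ (t, kj j)))\<^sup>2)"
        by (rule sum.cong) (use i e1 in auto)
      also have "\<dots> \<le> (\<Sum>t\<in>{..<l}. (AN $$ (i,t) - (\<Sum>j\<in>{..<d+1}. (sg j * X $$ (i,j) * cf j) * Q $$ (t, kj j)))\<^sup>2)"
        by (rule ls_min[where f="\<lambda>j t. Q $$ (t, kj j)" and r="\<lambda>t. AN $$ (i,t)", OF _ orthK]) simp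
      also have "\<dots> = (\<Sum>t<l. ((AN - X * lorentz_J d * transpose_mat XL) $$ (i,t))\<^sup>2)"
        by (rule sum.cong) (use i e2 in auto)
      finally show "(\<Sum>t<l. ((AN - XN * lorentz_J d * transpose_mat XL) $$ (i,t))\<^sup>2)
          \<le> (\<Sum>t<l. ((AN - X * lorentz_J d * transpose_mat XL) $$ (i,t))\<^sup>2)" .
    qed
    thus ?thesis unfolding frob_eq[OF c1] frob_eq[OF c2] by simp
  qed
  have posL: "\<forall>i<l. XL $$ (i,0) > 0" using Qpos lam0 by (simp add: XL_def)
  have posN: "\<forall>i<m. XN $$ (i,0) > 0"
  proof (intro allI impI)
    fix i assume i: "i < m"
    have "(\<Sum>t<l. AN $$ (i,t) * Q $$ (t, kj 0)) > 0"
      by (rule sum_pos) (use l1 i ANe Qpos in \<open>auto simp: kj_def lessThan_empty_iff\<close>)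
    thus "XN $$ (i,0) > 0" using XNe[OF i] cfpos[of 0] by (simp add: sg_def)
  qed
  show ?thesis
    using hyd XLc XNc partI partII posL posN unfolding A_def AN_def by blast
qed


end
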